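(* Let $b>0$, $L\in\mathbb{R}$, let $f:[L,\infty)\to\mathbb{R}$ and $h:(-\infty,L)\to\mathbb{R}$, and define $\tilde f:\mathbb{R}\to\mathbb{R}$ by $\tilde f(x)=f(x)$ for $x\ge L$ and $\tilde f(x)=h(x)$ for $x<L$. Suppose $\tilde f$ is twice differentiable on $\mathbb{R}$ and that $\tilde f$ and $\tilde f''$ are tempered distributions. Then for every $q\ge L$, with $Z\sim\operatorname{Lap}(0,b)$, $$\mathbb{E}\big[\tilde f(q+Z)-b^2\tilde f''(q+Z)\big]=f(q).$$
   Context: $\operatorname{Lap}(0,b)$ denotes the Laplace distribution with density $\frac{1}{2b}e^{-|x|/b}$. The Schwartz space $S(\mathbb{R})$ is the set of $C^\infty$ functions $s:\mathbb{R}\to\mathbb{C}$ with $\sup_x|x^m s^{(n)}(x)|<\infty$ for all integers $m,n\ge0$. A function $F:\mathbb{R}\to\mathbb{R}$ is a tempered distribution if it is locally integrable and $\int_{-\infty}^\infty |F(x)s(x)|dx<\infty$ for every $s\in S(\mathbb{R})$. *)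

theory Defs
  imports "HOL-Analysis.Analysis"
begin

fun higher_vderiv :: "nat \<Rightarrow> (real \<Rightarrow> complex) \<Rightarrow> real \<Rightarrow> complex" where
  "higher_vderiv 0 s = s"
| "higher_vderiv (Suc n) s = (\<lambda>x. vector_derivative (higher_vderiv n s) (at x))"

definition schwartz_space :: "(real \<Rightarrow> complex) set" where
  "schwartz_space = {s. (\<forall>n x. higher_vderiv n s differentiable (at x)) \<and>
      (\<forall>m n. \<exists>C. \<forall>x. norm (complex_of_real (x ^ m) * higher_vderiv n s x) \<le> C)}"

definition locally_integrable :: "(real \<Rightarrow> real) \<Rightarrow> bool" where
  "locally_integrable F \<longleftrightarrow> (\<forall>K. compact K \<longrightarrow> set_integrable lborel K F)"

definition tempered_distribution :: "(real \<Rightarrow> real) \<Rightarrow> bool" where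
  "tempered_distribution F \<longleftrightarrow> locally_integrable F \<and>
     (\<forall>s\<in>schwartz_space.
        (\<integral>\<^sup>+ x. ennreal (norm (complex_of_real (F x) * s x)) \<partial>lborel) < \<infinity>)"

definition laplace_density :: "real \<Rightarrow> real \<Rightarrow> real" where
  "laplace_density b x = exp (- \<bar>x\<bar> / b) / (2 * b)"

definition laplace_measure :: "real \<Rightarrow> real measure" where
  "laplace_measure b = density lborel (\<lambda>x. ennreal (laplace_density b x))"

end

theory Submission
  imports Defs "HOL-Computational_Algebra.Polynomial" "HOL-Real_Asymp.Real_Asymp"
begin


lemma sech_poly_deriv:
  fixes c :: real
  shows "((\<lambda>x. poly p (tanh (c*x)) / cosh (c*x)) has_real_derivative
     (poly (smult c (pderiv p * [:1,0,-1:] - p * [:0,1:])) (tanh (c*x)) / cosh (c*x))) (at x)"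
proof -
  have cz: "cosh (c*x) \<noteq> 0" by (metis cosh_real_pos less_irrefl)
  have l: "((\<lambda>x. c*x) has_real_derivative c) (at x)"
    by (auto intro!: derivative_eq_intros)
  have t: "((\<lambda>x. tanh(c*x)) has_real_derivative (1 - tanh(c*x)^2)*c) (at x)"
    using has_field_derivative_tanh[OF cz l] by simp
  have pt: "((\<lambda>x. poly p (tanh(c*x))) has_real_derivative poly (pderiv p) (tanh (c*x)) * ((1 - tanh(c*x)^2)*c)) (at x)"
    by (rule DERIV_chain2[OF poly_DERIV t])
  have ch: "((\<lambda>x. cosh(c*x)) has_real_derivative sinh(c*x)*c) (at x)"
    by (auto intro!: derivative_eq_intros)
  have "((\<lambda>x. poly p (tanh (c*x)) / cosh (c*x)) has_real_derivative
     (poly (pderiv p) (tanh (c*x)) * ((1 - tanh(c*x)^2)*c) * cosh(c*x) - poly p (tanh (c*x)) * (sinh(c*x)*c)) / (cosh (c*x) * cosh(c*x))) (at x)"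
    by (rule DERIV_divide[OF pt ch cz])
  moreover have "(poly (pderiv p) (tanh (c*x)) * ((1 - tanh(c*x)^2)*c) * cosh(c*x) - poly p (tanh (c*x)) * (sinh(c*x)*c)) / (cosh (c*x) * cosh(c*x))
     = poly (smult c (pderiv p * [:1,0,-1:] - p * [:0,1:])) (tanh (c*x)) / cosh (c*x)"
    using cz by (simp add: tanh_def field_simps power2_eq_square)
  ultimately show ?thesis by simp
qed

lemma sech_higher:
  fixes c :: real
  shows "\<exists>p. higher_vderiv n (\<lambda>x. complex_of_real (1 / cosh (c*x))) = (\<lambda>x. complex_of_real (poly p (tanh (c*x)) / cosh (c*x)))"
proof (induction n)
  case 0
  show ?case by (rule exI[of _ "[:1:]"]) simp
next
  case (Suc n)
  then obtain p where p: "higher_vderiv n (\<lambda>x. complex_of_real (1 / cosh (c*x))) = (\<lambda>x. complex_of_real (poly p (tanh (c*x)) / cosh (c*x)))" by blast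
  define q where "q = smult c (pderiv p * [:1,0,-1:] - p * [:0,1:])"
  have vd: "vector_derivative (\<lambda>x. complex_of_real (poly p (tanh (c*x)) / cosh (c*x))) (at x) = complex_of_real (poly q (tanh (c*x)) / cosh (c*x))" for x
    unfolding q_def by (rule vector_derivative_at[OF has_vector_derivative_of_real[OF sech_poly_deriv]])
  show ?case
  proof (intro exI[of _ q] ext)
    fix x show "higher_vderiv (Suc n) (\<lambda>x. complex_of_real (1 / cosh (c*x))) x = complex_of_real (poly q (tanh (c*x)) / cosh (c*x))"
      by (simp only: higher_vderiv.simps p vd)
  qed
qed


lemma exp_ge_pow_fact: "(y::real) \<ge> 0 \<Longrightarrow> y^m / fact m \<le> exp y"
proof -
  assume y: "y \<ge> 0"
  have e: "exp y = (\<Sum>n. y^n /\<^sub>R fact n)" by (rule sums_unique[OF exp_converges])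
  have "sum (\<lambda>n. y^n /\<^sub>R fact n) {m} \<le> (\<Sum>n. y^n /\<^sub>R fact n)"
    by (rule sum_le_suminf) (use y summable_exp in auto)
  then show ?thesis by (simp add: e divide_inverse mult.commute)
qed

lemma pow_sech_bound:
  fixes c x :: real assumes c: "c > 0"
  shows "\<bar>x\<bar>^m / cosh (c*x) \<le> 2 * fact m / c^m"
proof -
  have ch: "exp (\<bar>c*x\<bar>) / 2 \<le> cosh (c*x)"
    unfolding cosh_def by (cases "c*x \<ge> 0") (auto simp: abs_if)
  have "(c*\<bar>x\<bar>)^m / fact m \<le> exp (c*\<bar>x\<bar>)"
    by (rule exp_ge_pow_fact) (use c in auto)
  hence "\<bar>x\<bar>^m \<le> fact m * exp (\<bar>c*x\<bar>) / c^m"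
    using c by (simp add: field_simps power_mult_distrib abs_mult)
  also have "\<dots> \<le> fact m * (2 * cosh (c*x)) / c^m"
    using ch c by (intro divide_right_mono mult_left_mono) auto
  finally show ?thesis
    using cosh_real_pos[of "c*x"] c by (simp add: field_simps)
qed

lemma poly_tanh_bound:
  fixes p :: "real poly"
  shows "\<bar>poly p (tanh y)\<bar> \<le> (\<Sum>i\<le>degree p. \<bar>coeff p i\<bar>)"
proof -
  have t: "\<bar>tanh y\<bar> \<le> 1" using tanh_real_lt_1[of "\<bar>y\<bar>"] by simp
  have "\<bar>poly p (tanh y)\<bar> = \<bar>\<Sum>i\<le>degree p. coeff p i * tanh y ^ i\<bar>" by (simp add: poly_altdef)
  also have "\<dots> \<le> (\<Sum>i\<le>degree p. \<bar>coeff p i * tanh y ^ i\<bar>)" by (rule sum_abs)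
  also have "\<dots> \<le> (\<Sum>i\<le>degree p. \<bar>coeff p i\<bar>)"
    by (intro sum_mono) (auto simp: abs_mult power_abs intro!: mult_left_le power_le_one t)
  finally show ?thesis .
qed


lemma deriv_measurable:
  fixes g g' :: "real \<Rightarrow> real"
  assumes d: "\<And>x. (g has_real_derivative g' x) (at x)"
  shows "g' \<in> borel_measurable borel"
proof (rule borel_measurable_LIMSEQ_real)
  have cg: "continuous_on UNIV g"
    using d by (meson DERIV_isCont continuous_at_imp_continuous_on)
  show "(\<lambda>x. (g (x + inverse (real (Suc i))) - g x) / inverse (real (Suc i))) \<in> borel_measurable borel" for i
    by (intro borel_measurable_continuous_onI continuous_intros continuous_on_compose2[OF cg]) auto
  fix x
  have l: "((\<lambda>h. (g (x + h) - g x) / h) \<longlongrightarrow> g' x) (at 0)"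
    using d[of x] by (simp add: DERIV_def)
  have s: "filterlim (\<lambda>i. inverse (real (Suc i))) (at 0) sequentially"
    by (rule filterlim_atI[OF LIMSEQ_inverse_real_of_nat]) auto
  show "(\<lambda>i. (g (x + inverse (real (Suc i))) - g x) / inverse (real (Suc i))) \<longlonglongrightarrow> g' x"
    using filterlim_compose[OF l s] by simp
qed

lemma deriv_cont_measurable:
  fixes g g' :: "real \<Rightarrow> real"
  assumes d: "\<And>x. (g has_real_derivative g' x) (at x)"
  shows "g \<in> borel_measurable borel"
proof -
  have cg: "continuous_on UNIV g"
    using d by (meson DERIV_isCont continuous_at_imp_continuous_on)
  then show ?thesis by (rule borel_measurable_continuous_onI)
qed

lemma half_line:
  fixes G G1 G2 :: "real \<Rightarrow> real" and b :: real
  assumes b: "b > 0"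
  and d1: "\<And>x. (G has_real_derivative G1 x) (at x)"
  and d2: "\<And>x. (G1 has_real_derivative G2 x) (at x)"
  and iG: "integrable lborel (\<lambda>z. G z * exp(-\<bar>z\<bar>/(2*b)))"
  and iG2: "integrable lborel (\<lambda>z. G2 z * exp(-\<bar>z\<bar>/(2*b)))"
  shows "set_integrable lborel {0..} (\<lambda>z. (G z - b^2 * G2 z) * exp(-z/b))"
   and "(LINT z:{0..}|lborel. (G z - b^2 * G2 z) * exp(-z/b)) = b*(G 0 + b*G1 0)"
proof -
  define w where "w z = exp(-\<bar>z\<bar>/(2*b))" for z
  define H where "H z = (G z - b^2 * G2 z) * exp(-z/b)" for z
  define P where "P z = -b*(G z + b*G1 z)*exp(-z/b)" for z
  have mG[measurable]: "G \<in> borel_measurable borel" by (rule deriv_cont_measurable[OF d1])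
  have mG1[measurable]: "G1 \<in> borel_measurable borel" by (rule deriv_cont_measurable[OF d2])
  have mG2[measurable]: "G2 \<in> borel_measurable borel" by (rule deriv_measurable[OF d2])
  have iGa: "integrable lborel (\<lambda>z. \<bar>G z\<bar> * w z)"
    using integrable_abs[OF iG] by (simp add: w_def abs_mult)
  have iG2a: "integrable lborel (\<lambda>z. \<bar>G2 z\<bar> * w z)"
    using integrable_abs[OF iG2] by (simp add: w_def abs_mult)
  have wpos: "w z > 0" for z by (simp add: w_def)
  have iH: "set_integrable lborel {0..} H"
    unfolding set_integrable_def
  proof (rule Bochner_Integration.integrable_bound)
    show "integrable lborel (\<lambda>z. \<bar>G z\<bar> * w z + b^2 * (\<bar>G2 z\<bar> * w z))"
      by (intro Bochner_Integration.integrable_add integrable_mult_right iGa iG2a)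
    show "(\<lambda>x. indicator {0..} x *\<^sub>R H x) \<in> borel_measurable lborel"
      unfolding H_def by measurable
    show "AE x in lborel. norm (indicator {0..} x *\<^sub>R H x) \<le> norm (\<bar>G x\<bar> * w x + b^2 * (\<bar>G2 x\<bar> * w x))"
    proof (rule AE_I2)
      fix z :: real
      show "norm (indicator {0..} z *\<^sub>R H z) \<le> norm (\<bar>G z\<bar> * w z + b^2 * (\<bar>G2 z\<bar> * w z))"
      proof (cases "z \<ge> 0")
        case True
        have e: "exp(-z/b) \<le> w z" unfolding w_def using True b
          by (simp add: frac_le divide_le_cancel)
        have t: "\<bar>G z - b^2*G2 z\<bar> \<le> \<bar>G z\<bar> + b^2*\<bar>G2 z\<bar>"
          using abs_triangle_ineq4[of "G z" "b^2*G2 z"] by (simp add: abs_mult)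
        have "\<bar>H z\<bar> \<le> (\<bar>G z\<bar> + b^2 * \<bar>G2 z\<bar>) * exp(-z/b)"
          unfolding H_def abs_mult using t by (simp add: mult_right_mono)
        also have "\<dots> \<le> (\<bar>G z\<bar> + b^2 * \<bar>G2 z\<bar>) * w z"
          by (rule mult_left_mono[OF e]) auto
        finally show ?thesis using True wpos[of z]
          by (simp add: algebra_simps)
      next
        case False
        then show ?thesis using wpos[of z] by simp
      qed
    qed
  qed
  then show "set_integrable lborel {0..} (\<lambda>z. (G z - b^2 * G2 z) * exp(-z/b))"
    unfolding H_def[abs_def] .
  have dP: "(P has_real_derivative H z) (at z)" for z
  proof -
    have dexp: "((\<lambda>z. exp(-z/b)) has_real_derivative exp(-z/b) * (-1/b)) (at z)"
      using b by (auto intro!: derivative_eq_intros simp: field_simps)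
    have dA: "((\<lambda>z. -b*(G z + b*G1 z)) has_real_derivative -b*(G1 z + b*G2 z)) (at z)"
      by (intro DERIV_cmult DERIV_add d1 d2)
    have "(P has_real_derivative (-b*(G1 z + b*G2 z)) * exp(-z/b) + exp(-z/b) * (-1/b) * (-b*(G z + b*G1 z))) (at z)"
      unfolding P_def by (rule DERIV_mult[OF dA dexp])
    moreover have "(-b*(G1 z + b*G2 z)) * exp(-z/b) + exp(-z/b) * (-1/b) * (-b*(G z + b*G1 z)) = H z"
      unfolding H_def using b by (simp add: field_simps power2_eq_square)
    ultimately show ?thesis by simp
  qed
  have intR: "(LINT z:{0..R}|lborel. H z) = P R - P 0" if R: "R \<ge> 0" for R
  proof -
    have sR: "set_integrable lborel {0..R} H"
      by (rule set_integrable_subset[OF iH]) auto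
    have "(H has_integral (P R - P 0)) {0..R}"
      by (rule fundamental_theorem_of_calculus[OF R])
         (auto simp: has_real_derivative_iff_has_vector_derivative[symmetric] intro: has_field_derivative_at_within dP)
    then show ?thesis using set_borel_integral_eq_integral(2)[OF sR] by (simp add: integral_unique)
  qed
  define M2 where "M2 = (\<integral>z. \<bar>G2 z\<bar> * w z \<partial>lborel)"
  have M2pos: "M2 \<ge> 0" unfolding M2_def by (rule integral_nonneg_AE) (auto intro!: AE_I2 simp: wpos less_imp_le)
  have G1b: "\<bar>G1 R\<bar> \<le> \<bar>G1 0\<bar> + exp(R/(2*b)) * M2" if R: "R \<ge> 0" for R
  proof -
    have bnd: "\<bar>indicator {0..R} z *\<^sub>R G2 z\<bar> \<le> exp(R/(2*b)) * (\<bar>G2 z\<bar> * w z)" for z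
    proof (cases "z \<in> {0..R}")
      case True
      have "exp(-R/(2*b)) \<le> w z" unfolding w_def using True b by (simp add: divide_le_cancel)
      hence "1 \<le> exp(R/(2*b)) * w z" by (simp add: exp_minus field_simps)
      hence "\<bar>G2 z\<bar> * 1 \<le> \<bar>G2 z\<bar> * (exp(R/(2*b)) * w z)" by (intro mult_left_mono) auto
      then show ?thesis using True by (simp add: ac_simps)
    next
      case False then show ?thesis using wpos[of z] by simp
    qed
    have ib: "integrable lborel (\<lambda>z. exp(R/(2*b)) * (\<bar>G2 z\<bar> * w z))"
      by (intro integrable_mult_right iG2a)
    have sR: "set_integrable lborel {0..R} G2"
      unfolding set_integrable_def
      by (rule Bochner_Integration.integrable_bound[OF ib]) (auto intro!: AE_I2 simp: bnd[simplified] wpos less_imp_le)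
    have "(G2 has_integral (G1 R - G1 0)) {0..R}"
      by (rule fundamental_theorem_of_calculus[OF R])
         (auto simp: has_real_derivative_iff_has_vector_derivative[symmetric] intro: has_field_derivative_at_within d2)
    hence eq: "G1 R - G1 0 = (LINT z:{0..R}|lborel. G2 z)"
      using set_borel_integral_eq_integral(2)[OF sR] by (simp add: integral_unique)
    have "\<bar>LINT z:{0..R}|lborel. G2 z\<bar> \<le> (\<integral>z. \<bar>indicator {0..R} z *\<^sub>R G2 z\<bar> \<partial>lborel)"
      unfolding set_lebesgue_integral_def by (rule integral_abs_bound)
    also have "\<dots> \<le> (\<integral>z. exp(R/(2*b)) * (\<bar>G2 z\<bar> * w z) \<partial>lborel)"
      by (rule integral_mono[OF _ ib]) (use sR bnd[simplified] in \<open>auto simp: set_integrable_def\<close>)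
    also have "\<dots> = exp(R/(2*b)) * M2" by (simp add: M2_def)
    finally show ?thesis using eq by linarith
  qed
  have G1b': "\<bar>G1 z\<bar> \<le> \<bar>G1 0\<bar> + exp(R/(2*b)) * M2" if "0 \<le> z" "z \<le> R" for z R
  proof -
    have "exp(z/(2*b)) * M2 \<le> exp(R/(2*b)) * M2"
      using that b M2pos by (intro mult_right_mono) (auto simp: divide_right_mono)
    then show ?thesis using G1b[OF that(1)] by linarith
  qed
  have Gb: "\<bar>G R\<bar> \<le> \<bar>G 0\<bar> + R * (\<bar>G1 0\<bar> + exp(R/(2*b)) * M2)" if R: "R \<ge> 0" for R
  proof (cases "R = 0")
    case True then show ?thesis by simp
  next
    case False
    with R have "0 < R" by simp
    from MVT2[OF this, of G G1] d1 obtain \<xi> where xi: "0 < \<xi>" "\<xi> < R" "G R - G 0 = (R - 0) * G1 \<xi>"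
      by blast
    have "\<bar>G1 \<xi>\<bar> \<le> \<bar>G1 0\<bar> + exp(R/(2*b)) * M2" using G1b'[of \<xi> R] xi by simp
    hence "\<bar>R * G1 \<xi>\<bar> \<le> R * (\<bar>G1 0\<bar> + exp(R/(2*b)) * M2)"
      using R by (simp add: abs_mult mult_left_mono)
    moreover have "G R = G 0 + R * G1 \<xi>" using xi by simp
    moreover have "\<bar>G 0 + R * G1 \<xi>\<bar> \<le> \<bar>G 0\<bar> + \<bar>R * G1 \<xi>\<bar>" by (rule abs_triangle_ineq)
    ultimately show ?thesis by linarith
  qed
  have P0: "(P \<longlongrightarrow> 0) at_top"
  proof (rule Lim_null_comparison)
    define A where "A = \<bar>G1 0\<bar>"
    show "\<forall>\<^sub>F R in at_top. norm (P R) \<le> b * \<bar>G 0\<bar> * exp(-R/b) + b * A * ((R + b) * exp(-R/b)) + b * M2 * ((R + b) * exp(-R/(2*b)))"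
      using eventually_ge_at_top[of 0]
    proof eventually_elim
      case (elim R)
      have ee: "exp(R/(2*b)) * exp(-R/b) = exp(-R/(2*b))"
        by (simp add: exp_add[symmetric] field_simps)
      have "norm (P R) = b * \<bar>G R + b * G1 R\<bar> * exp(-R/b)"
        unfolding P_def using b by (simp add: abs_mult)
      also have "\<dots> \<le> b * (\<bar>G 0\<bar> + R * (A + exp(R/(2*b)) * M2) + b * (A + exp(R/(2*b)) * M2)) * exp(-R/b)"
      proof -
        have "\<bar>G R + b * G1 R\<bar> \<le> \<bar>G R\<bar> + b * \<bar>G1 R\<bar>" using b by (simp add: abs_mult abs_triangle_ineq order_trans[OF abs_triangle_ineq])
        also have "\<dots> \<le> (\<bar>G 0\<bar> + R * (A + exp(R/(2*b)) * M2) + b * (A + exp(R/(2*b)) * M2))"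
          using Gb[OF elim] G1b[OF elim] b unfolding A_def by (intro add_mono mult_left_mono) auto
        finally show ?thesis using b by (intro mult_right_mono mult_left_mono) auto
      qed
      also have "\<dots> = b * \<bar>G 0\<bar> * exp(-R/b) + b * A * ((R + b) * exp(-R/b)) + b * M2 * ((R + b) * (exp(R/(2*b)) * exp(-R/b)))"
        by (simp add: algebra_simps)
      finally show ?case by (simp only: ee)
    qed
    have l1: "((\<lambda>R. exp(-R/b)) \<longlongrightarrow> 0) at_top" using b by real_asymp
    have l2: "((\<lambda>R. (R + b) * exp(-R/b)) \<longlongrightarrow> 0) at_top" using b by real_asymp
    have l3: "((\<lambda>R. (R + b) * exp(-R/(2*b))) \<longlongrightarrow> 0) at_top" using b by real_asymp
    show "((\<lambda>R. b * \<bar>G 0\<bar> * exp(-R/b) + b * A * ((R + b) * exp(-R/b)) + b * M2 * ((R + b) * exp(-R/(2*b)))) \<longlongrightarrow> 0) at_top"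
      using tendsto_add[OF tendsto_add[OF tendsto_mult_left[OF l1] tendsto_mult_left[OF l2]] tendsto_mult_left[OF l3]]
      by simp
  qed
  have lim1: "((\<lambda>R. LINT z:{0..R}|lborel. H z) \<longlongrightarrow> (LINT z:{0..}|lborel. H z)) at_top"
    by (rule tendsto_set_lebesgue_integral_at_top[OF _ iH]) auto
  have lim2: "((\<lambda>R. LINT z:{0..R}|lborel. H z) \<longlongrightarrow> 0 - P 0) at_top"
  proof -
    have "((\<lambda>R. P R - P 0) \<longlongrightarrow> 0 - P 0) at_top" by (intro tendsto_intros P0)
    moreover have "\<forall>\<^sub>F R in at_top. P R - P 0 = (LINT z:{0..R}|lborel. H z)"
      using eventually_ge_at_top[of 0] by eventually_elim (simp add: intR)
    ultimately show ?thesis by (rule Lim_transform_eventually)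
  qed
  have "(LINT z:{0..}|lborel. H z) = 0 - P 0"
    using tendsto_unique[OF _ lim1 lim2] by simp
  then show "(LINT z:{0..}|lborel. (G z - b^2 * G2 z) * exp(-z/b)) = b*(G 0 + b*G1 0)"
    by (simp add: H_def P_def)
qed

lemma sech_schwartz:
  fixes c :: real assumes c: "c > 0"
  shows "(\<lambda>x. complex_of_real (1 / cosh (c*x))) \<in> schwartz_space"
  unfolding schwartz_space_def
proof (intro CollectI conjI allI)
  fix n x
  obtain p where p: "higher_vderiv n (\<lambda>x. complex_of_real (1 / cosh (c*x))) = (\<lambda>x. complex_of_real (poly p (tanh (c*x)) / cosh (c*x)))"
    using sech_higher by blast
  show "higher_vderiv n (\<lambda>x. complex_of_real (1 / cosh (c*x))) differentiable (at x)"
    unfolding p by (rule differentiableI_vector[OF has_vector_derivative_of_real[OF sech_poly_deriv]])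
next
  fix m n
  obtain p where p: "higher_vderiv n (\<lambda>x. complex_of_real (1 / cosh (c*x))) = (\<lambda>x. complex_of_real (poly p (tanh (c*x)) / cosh (c*x)))"
    using sech_higher by blast
  define S where "S = (\<Sum>i\<le>degree p. \<bar>coeff p i\<bar>)"
  show "\<exists>C. \<forall>x. norm (complex_of_real (x ^ m) * higher_vderiv n (\<lambda>x. complex_of_real (1 / cosh (c*x))) x) \<le> C"
  proof (intro exI allI)
    fix x :: real
    have cp: "cosh (c*x) > 0" by (rule cosh_real_pos)
    have fn: "0 \<le> 2 * fact m / c^m" using c by (intro divide_nonneg_pos) auto
    have "norm (complex_of_real (x ^ m) * higher_vderiv n (\<lambda>x. complex_of_real (1 / cosh (c*x))) x)
        = (\<bar>x\<bar>^m / cosh (c*x)) * \<bar>poly p (tanh (c*x))\<bar>"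
      unfolding p using cp by (simp add: norm_mult norm_divide norm_power)
    also have "\<dots> \<le> (2 * fact m / c^m) * S"
      unfolding S_def
      by (intro mult_mono pow_sech_bound[OF c] poly_tanh_bound fn) (use cp in auto)
    finally show "norm (complex_of_real (x ^ m) * higher_vderiv n (\<lambda>x. complex_of_real (1 / cosh (c*x))) x) \<le> (2 * fact m / c^m) * S" .
  qed
qed

lemma tempered_weighted:
  fixes F :: "real \<Rightarrow> real" and c :: real
  assumes T: "tempered_distribution F" and m[measurable]: "F \<in> borel_measurable borel" and c: "c > 0"
  shows "integrable lborel (\<lambda>x. F x / cosh (c*x))"
proof (rule integrableI_bounded)
  have [measurable]: "(\<lambda>x. cosh (c*x)) \<in> borel_measurable borel"
    by (rule borel_measurable_continuous_onI) (auto intro!: continuous_intros)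
  show "(\<lambda>x. F x / cosh (c*x)) \<in> borel_measurable lborel" by measurable
  have "(\<integral>\<^sup>+ x. ennreal (norm (complex_of_real (F x) * complex_of_real (1 / cosh (c*x)))) \<partial>lborel) < \<infinity>"
  proof -
    have "\<forall>s\<in>schwartz_space. (\<integral>\<^sup>+ x. ennreal (norm (complex_of_real (F x) * s x)) \<partial>lborel) < \<infinity>"
      using T unfolding tempered_distribution_def by blast
    from bspec[OF this sech_schwartz[OF c]] show ?thesis by simp
  qed
  moreover have "norm (complex_of_real (F x) * complex_of_real (1 / cosh (c*x))) = norm (F x / cosh (c*x))" for x
    using cosh_real_pos[of "c*x"] by (simp add: norm_mult norm_divide)
  ultimately show "(\<integral>\<^sup>+ x. ennreal (norm (F x / cosh (c*x))) \<partial>lborel) < \<infinity>" by simp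
qed

lemma shift_weight:
  fixes K :: "real \<Rightarrow> real" and c s q :: real
  assumes c: "c > 0" and s: "\<bar>s\<bar> = 1" and m[measurable]: "K \<in> borel_measurable borel"
    and I: "integrable lborel (\<lambda>x. K x / cosh (c*x))"
  shows "integrable lborel (\<lambda>z. K (q + s*z) * exp (-\<bar>z\<bar>/(2*(1/(2*c)))))"
proof -
  have s0: "s \<noteq> 0" using s by auto
  have I2: "integrable lborel (\<lambda>z. exp (c*\<bar>q\<bar>) * (K (q + s*z) / cosh (c*(q + s*z))))"
    using lborel_integrable_real_affine[OF I s0, of q] by (intro integrable_mult_right) simp
  show ?thesis
  proof (rule Bochner_Integration.integrable_bound[OF I2])
    show "(\<lambda>z. K (q + s*z) * exp (-\<bar>z\<bar>/(2*(1/(2*c))))) \<in> borel_measurable lborel" by measurable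
    show "AE z in lborel. norm (K (q + s*z) * exp (-\<bar>z\<bar>/(2*(1/(2*c))))) \<le> norm (exp (c*\<bar>q\<bar>) * (K (q + s*z) / cosh (c*(q + s*z))))"
    proof (rule AE_I2)
      fix z :: real
      let ?y = "c*(q + s*z)"
      have cp: "cosh ?y > 0" by (rule cosh_real_pos)
      have ch: "cosh ?y \<le> exp \<bar>?y\<bar>" unfolding cosh_def by (cases "?y \<ge> 0") (auto simp: abs_if)
      have tri: "\<bar>q + s*z\<bar> \<le> \<bar>q\<bar> + \<bar>z\<bar>" using abs_triangle_ineq[of q "s*z"] s by (simp add: abs_mult)
      have ya: "\<bar>?y\<bar> = c * \<bar>q + s*z\<bar>" using c by (simp add: abs_mult)
      have "c * \<bar>q + s*z\<bar> \<le> c * (\<bar>q\<bar> + \<bar>z\<bar>)" using tri c by (intro mult_left_mono) auto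
      hence yb: "- c*\<bar>z\<bar> \<le> c*\<bar>q\<bar> + - \<bar>?y\<bar>" using ya by (simp add: algebra_simps)
      have "exp (-\<bar>z\<bar>/(2*(1/(2*c)))) = exp (- c*\<bar>z\<bar>)" using c by simp
      also have "\<dots> \<le> exp (c*\<bar>q\<bar>) * exp (-\<bar>?y\<bar>)"
        unfolding exp_add[symmetric] using yb by (simp only: exp_le_cancel_iff)
      also have "\<dots> \<le> exp (c*\<bar>q\<bar>) / cosh ?y"
        using ch cp by (simp add: exp_minus field_simps)
      finally have e: "exp (-\<bar>z\<bar>/(2*(1/(2*c)))) \<le> exp (c*\<bar>q\<bar>) / cosh ?y" .
      have "\<bar>K (q + s*z)\<bar> * exp (-\<bar>z\<bar>/(2*(1/(2*c)))) \<le> \<bar>K (q + s*z)\<bar> * (exp (c*\<bar>q\<bar>) / cosh ?y)"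
        by (rule mult_left_mono[OF e]) auto
      then show "norm (K (q + s*z) * exp (-\<bar>z\<bar>/(2*(1/(2*c))))) \<le> norm (exp (c*\<bar>q\<bar>) * (K (q + s*z) / cosh ?y))"
        using cp by (simp add: abs_mult field_simps)
    qed
  qed
qed

theorem mainTheorem4:
  fixes b L :: real and f h :: "real \<Rightarrow> real"
  defines "ft \<equiv> (\<lambda>x. if x \<ge> L then f x else h x)"
  assumes "b > 0"
    and "\<forall>x. ft differentiable (at x)"
    and "\<forall>x. deriv ft differentiable (at x)"
    and "tempered_distribution ft"
    and "tempered_distribution (deriv (deriv ft))"
    and "q \<ge> L"
  shows "integrable (laplace_measure b) (\<lambda>z. ft (q + z) - b\<^sup>2 * deriv (deriv ft) (q + z))
     \<and> (\<integral>z. ft (q + z) - b\<^sup>2 * deriv (deriv ft) (q + z) \<partial>laplace_measure b) = f q"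
proof -
  define F1 where "F1 = deriv ft"
  define F2 where "F2 = deriv F1"
  have b: "b > 0" using assms(2) .
  have dF: "(ft has_real_derivative F1 x) (at x)" for x
    using assms(3) unfolding F1_def by (simp add: DERIV_deriv_iff_real_differentiable)
  have dF1: "(F1 has_real_derivative F2 x) (at x)" for x
    using assms(4) unfolding F2_def F1_def by (simp add: DERIV_deriv_iff_real_differentiable)
  have mF[measurable]: "ft \<in> borel_measurable borel" by (rule deriv_cont_measurable[OF dF])
  have mF2[measurable]: "F2 \<in> borel_measurable borel" by (rule deriv_measurable[OF dF1])
  define c where "c = 1/(2*b)"
  have c: "c > 0" using b by (simp add: c_def)
  have wc: "2*(1/(2*c)) = 2*b" using b by (simp add: c_def)
  have TF: "integrable lborel (\<lambda>x. ft x / cosh (c*x))" by (rule tempered_weighted[OF assms(5) mF c])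
  have TF2: "integrable lborel (\<lambda>x. F2 x / cosh (c*x))"
    using tempered_weighted[OF assms(6) _ c] mF2 unfolding F2_def F1_def by simp
  have iGp: "integrable lborel (\<lambda>z. ft (q + z) * exp(-\<bar>z\<bar>/(2*b)))"
    using shift_weight[OF c _ mF TF, of 1 q] unfolding wc by simp
  have iG2p: "integrable lborel (\<lambda>z. F2 (q + z) * exp(-\<bar>z\<bar>/(2*b)))"
    using shift_weight[OF c _ mF2 TF2, of 1 q] unfolding wc by simp
  have iGm: "integrable lborel (\<lambda>z. ft (q - z) * exp(-\<bar>z\<bar>/(2*b)))"
    using shift_weight[OF c _ mF TF, of "-1" q] unfolding wc by simp
  have iG2m: "integrable lborel (\<lambda>z. F2 (q - z) * exp(-\<bar>z\<bar>/(2*b)))"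
    using shift_weight[OF c _ mF2 TF2, of "-1" q] unfolding wc by simp
  have dGp: "((\<lambda>z. ft (q+z)) has_real_derivative F1 (q+z)) (at z)" for z
  proof -
    have "((\<lambda>z. ft (q+z)) has_real_derivative F1 (q+z) * 1) (at z)"
      by (rule DERIV_chain2[OF dF]) (auto intro!: derivative_eq_intros)
    then show ?thesis by simp
  qed
  have dG1p: "((\<lambda>z. F1 (q+z)) has_real_derivative F2 (q+z)) (at z)" for z
  proof -
    have "((\<lambda>z. F1 (q+z)) has_real_derivative F2 (q+z) * 1) (at z)"
      by (rule DERIV_chain2[OF dF1]) (auto intro!: derivative_eq_intros)
    then show ?thesis by simp
  qed
  have dGm: "((\<lambda>z. ft (q-z)) has_real_derivative -F1 (q-z)) (at z)" for z
  proof -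
    have "((\<lambda>z. ft (q-z)) has_real_derivative F1 (q-z) * (-1)) (at z)"
      by (rule DERIV_chain2[OF dF]) (auto intro!: derivative_eq_intros)
    then show ?thesis by simp
  qed
  have dG1m: "((\<lambda>z. - F1 (q-z)) has_real_derivative F2 (q-z)) (at z)" for z
  proof -
    have "((\<lambda>z. F1 (q-z)) has_real_derivative F2 (q-z) * (-1)) (at z)"
      by (rule DERIV_chain2[OF dF1]) (auto intro!: derivative_eq_intros)
    then show ?thesis using DERIV_minus by fastforce
  qed
  note hp = half_line[of b "\<lambda>z. ft (q+z)" "\<lambda>z. F1 (q+z)" "\<lambda>z. F2 (q+z)", OF b dGp dG1p iGp iG2p]
  note hm = half_line[of b "\<lambda>z. ft (q-z)" "\<lambda>z. - F1 (q-z)" "\<lambda>z. F2 (q-z)", OF b dGm dG1m iGm iG2m]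
  define Pp where "Pp z = indicator {0..} z * ((ft (q+z) - b^2 * F2 (q+z)) * exp(-z/b))" for z
  define Pm where "Pm z = indicator {0..} z * ((ft (q-z) - b^2 * F2 (q-z)) * exp(-z/b))" for z
  define Pm' where "Pm' z = indicator {0<..} z * ((ft (q-z) - b^2 * F2 (q-z)) * exp(-z/b))" for z
  have mPm[measurable]: "Pm \<in> borel_measurable borel" unfolding Pm_def[abs_def] by measurable
  have mPm'[measurable]: "Pm' \<in> borel_measurable borel" unfolding Pm'_def[abs_def] by measurable
  have iPp: "integrable lborel Pp" using hp(1) unfolding set_integrable_def Pp_def[abs_def] by simp
  have iPm: "integrable lborel Pm" using hm(1) unfolding set_integrable_def Pm_def[abs_def] by simp
  have IPp: "integral\<^sup>L lborel Pp = b * (ft q + b * F1 q)"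
    using hp(2) unfolding set_lebesgue_integral_def Pp_def[abs_def] by simp
  have IPm: "integral\<^sup>L lborel Pm = b * (ft q - b * F1 q)"
    using hm(2) unfolding set_lebesgue_integral_def Pm_def[abs_def] by simp
  have AEm: "AE z in lborel. Pm z = Pm' z"
    using AE_lborel_singleton[of "0::real"] by eventually_elim (auto simp: Pm_def Pm'_def indicator_def)
  have iPm': "integrable lborel Pm'"
    using integrable_cong_AE[of Pm lborel Pm'] AEm iPm by simp
  have IPm': "integral\<^sup>L lborel Pm' = b * (ft q - b * F1 q)"
    using integral_cong_AE[of Pm lborel Pm'] AEm IPm by simp
  have iNn: "integrable lborel (\<lambda>z. Pm' (0 + (-1) * z))"
    by (rule lborel_integrable_real_affine[OF iPm']) simp
  have INn: "integral\<^sup>L lborel (\<lambda>z. Pm' (0 + (-1) * z)) = b * (ft q - b * F1 q)"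
    using lborel_integral_real_affine[of "-1" Pm' 0] IPm' by simp
  define g where "g z = ft (q + z) - b\<^sup>2 * F2 (q + z)" for z
  have mg[measurable]: "g \<in> borel_measurable borel" unfolding g_def[abs_def] by measurable
  have mld[measurable]: "laplace_density b \<in> borel_measurable borel"
    unfolding laplace_density_def[abs_def] by measurable
  have ld_nn: "0 \<le> laplace_density b x" for x using b by (simp add: laplace_density_def)
  have pw: "laplace_density b z *\<^sub>R g z = (1/(2*b)) * (Pp z + Pm' (0 + (-1) * z))" for z
  proof (cases "z \<ge> 0")
    case True
    then show ?thesis using b
      by (simp add: laplace_density_def g_def Pp_def Pm'_def indicator_def)
  next
    case False
    then show ?thesis using b
      by (simp add: laplace_density_def g_def Pp_def Pm'_def indicator_def)
  qed
  have iL: "integrable lborel (\<lambda>z. laplace_density b z *\<^sub>R g z)"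
    unfolding pw by (intro integrable_mult_right Bochner_Integration.integrable_add iPp iNn)
  have IL: "integral\<^sup>L lborel (\<lambda>z. laplace_density b z *\<^sub>R g z) = ft q"
  proof -
    have "integral\<^sup>L lborel (\<lambda>z. laplace_density b z *\<^sub>R g z) = (1/(2*b)) * (integral\<^sup>L lborel Pp + integral\<^sup>L lborel (\<lambda>z. Pm' (0 + (-1) * z)))"
      unfolding pw integral_mult_right_zero Bochner_Integration.integral_add[OF iPp iNn] ..
    also have "\<dots> = ft q" unfolding IPp INn using b by (simp add: field_simps)
    finally show ?thesis .
  qed
  have dd: "deriv (deriv ft) = F2" by (simp add: F1_def F2_def)
  have ftq: "ft q = f q" using assms(7) by (simp add: ft_def)
  have e1: "integrable (laplace_measure b) g"
    unfolding laplace_measure_def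
    using integrable_density[of g lborel "laplace_density b"] ld_nn iL by simp
  have e2: "(\<integral>z. g z \<partial>laplace_measure b) = f q"
    unfolding laplace_measure_def
    using integral_density[of g lborel "laplace_density b"] ld_nn IL ftq by simp
  show ?thesis using e1 e2 unfolding dd g_def[abs_def] by simp
qed
end
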